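(* Let $\ell,\ell'$ be nondegenerate Hermitian forms on complex $n$-dimensional spaces $W,W'$, and let $A:W\to W$, $A':W'\to W'$ be nonsingular antilinear operators that are $\ell$-self-adjoint and $\ell'$-self-adjoint respectively. If the pairs $(\ell,A^2)$ and $(\ell',A'^2)$ are equivalent (i.e. there is a linear isomorphism $\varphi:W\to W'$ with $\ell'(\varphi v,\varphi w)=\ell(v,w)$ and $\varphi A^2=A'^2\varphi$; equivalently they have the same Gohberg--Lancaster--Rodman canonical form), then $(\ell,A)$ and $(\ell',A')$ are equivalent (there is a linear isomorphism $\psi:W\to W'$ with $\ell'(\psi v,\psi w)=\ell(v,w)$ and $\psi A=A'\psi$). In other words, for nonsingular $A$ the canonical form of $(\ell,A)$ given by the simultaneous canonical form theorem is determined by the canonical form of the pair $(\ell,A^2)$.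
   Context: An antilinear operator satisfies $A(zv+w)=\bar z Av+Aw$. Hermitian forms are linear in the first argument and conjugate-linear in the second. $A$ is $\ell$-self-adjoint if $\ell(Av,w)=\ell(Aw,v)$ for all $v,w$; then $A^2$ is a linear $\ell$-self-adjoint operator (i.e. $\ell(A^2v,w)=\ell(v,A^2w)$). The Gohberg--Lancaster--Rodman canonical form classifies pairs (nondegenerate Hermitian form, self-adjoint linear operator) up to simultaneous change of basis. *)

theory Defs
  imports "HOL-Analysis.Analysis"
begin

text \<open>Complex n-dimensional spaces are modelled as complex ^ 'n (n = CARD('n)).\<close>

definition clinear_map :: "(complex ^ 'n \<Rightarrow> complex ^ 'm) \<Rightarrow> bool" where
  "clinear_map f \<longleftrightarrow> Vector_Spaces.linear (*s) (*s) f"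

definition antilinear_map :: "(complex ^ 'n \<Rightarrow> complex ^ 'n) \<Rightarrow> bool" where
  "antilinear_map A \<longleftrightarrow> (\<forall>z v w. A (z *s v + w) = cnj z *s A v + A w)"

definition hermitian_form :: "(complex ^ 'n \<Rightarrow> complex ^ 'n \<Rightarrow> complex) \<Rightarrow> bool" where
  "hermitian_form l \<longleftrightarrow>
     (\<forall>z u v w. l (z *s u + v) w = z * l u w + l v w) \<and>
     (\<forall>z u v w. l w (z *s u + v) = cnj z * l w u + l w v) \<and>
     (\<forall>v w. l w v = cnj (l v w))"

definition nondegenerate :: "(complex ^ 'n \<Rightarrow> complex ^ 'n \<Rightarrow> complex) \<Rightarrow> bool" where
  "nondegenerate l \<longleftrightarrow> (\<forall>v. (\<forall>w. l v w = 0) \<longrightarrow> v = 0)"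

definition l_self_adjoint_anti ::
  "(complex ^ 'n \<Rightarrow> complex ^ 'n \<Rightarrow> complex) \<Rightarrow> (complex ^ 'n \<Rightarrow> complex ^ 'n) \<Rightarrow> bool" where
  "l_self_adjoint_anti l A \<longleftrightarrow> (\<forall>v w. l (A v) w = l (A w) v)"

definition nonsingular :: "(complex ^ 'n \<Rightarrow> complex ^ 'n) \<Rightarrow> bool" where
  "nonsingular A \<longleftrightarrow> (\<forall>v. A v = 0 \<longrightarrow> v = 0)"

definition pair_equiv ::
  "(complex ^ 'n \<Rightarrow> complex ^ 'n \<Rightarrow> complex) \<Rightarrow> (complex ^ 'n \<Rightarrow> complex ^ 'n) \<Rightarrow>
   (complex ^ 'm \<Rightarrow> complex ^ 'm \<Rightarrow> complex) \<Rightarrow> (complex ^ 'm \<Rightarrow> complex ^ 'm) \<Rightarrow> bool" where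
  "pair_equiv l B l' B' \<longleftrightarrow>
     (\<exists>\<phi>. clinear_map \<phi> \<and> bij \<phi> \<and>
          (\<forall>v w. l' (\<phi> v) (\<phi> w) = l v w) \<and> (\<forall>v. \<phi> (B v) = B' (\<phi> v)))"

end

theory Submission
  imports Defs "HOL-Computational_Algebra.Fundamental_Theorem_Algebra"
begin


lemma clinear_iff: "clinear_map f \<longleftrightarrow> (\<forall>x y. f (x + y) = f x + f y) \<and> (\<forall>c x. f (c *s x) = c *s f x)"
  unfolding clinear_map_def Vector_Spaces.linear_iff by (auto intro: vec.vector_space_axioms)

lemma clinear_add: "clinear_map f \<Longrightarrow> f (x + y) = f x + f y" by (simp add: clinear_iff)
lemma clinear_scale: "clinear_map f \<Longrightarrow> f (c *s x) = c *s f x" by (simp add: clinear_iff)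
lemma clinear_0: "clinear_map f \<Longrightarrow> f 0 = 0"
  by (metis clinear_scale vector_smult_lzero)
lemma clinear_diff: "clinear_map f \<Longrightarrow> f (x - y) = f x - f y"
  by (metis add_diff_cancel clinear_add diff_add_cancel)
lemma clinear_sum: "clinear_map f \<Longrightarrow> f (sum g S) = (\<Sum>i\<in>S. f (g i))"
  by (induction S rule: infinite_finite_induct) (auto simp: clinear_0 clinear_add)
lemma clinear_comp: "clinear_map f \<Longrightarrow> clinear_map g \<Longrightarrow> clinear_map (\<lambda>v. f (g v))"
  by (simp add: clinear_iff)

definition peval :: "complex poly \<Rightarrow> (complex^'n \<Rightarrow> complex^'n) \<Rightarrow> complex^'n \<Rightarrow> complex^'n" where
  "peval p X = fold_coeffs (\<lambda>a f v. a *s v + X (f v)) p (\<lambda>v. 0)"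

lemma peval_0[simp]: "peval 0 X = (\<lambda>v. 0)" by (simp add: peval_def)

lemma peval_pCons: "clinear_map X \<Longrightarrow> peval (pCons a p) X = (\<lambda>v. a *s v + X (peval p X v))"
proof (cases "p = 0 \<and> a = 0")
  case True
  assume "clinear_map X"
  then show ?thesis using True by (simp add: clinear_0)
next
  case False
  then show ?thesis
    by (auto simp: peval_def fold_coeffs_pCons_not_0_0_eq fold_coeffs_pCons_coeff_not_0_eq)
qed

lemma peval_const: "clinear_map X \<Longrightarrow> peval [:c:] X v = c *s v"
  by (simp add: peval_pCons clinear_0)

lemma peval_1: "clinear_map X \<Longrightarrow> peval 1 X v = v"
  using peval_const[of X 1] by (simp add: one_pCons)

lemma peval_x: "clinear_map X \<Longrightarrow> peval [:0,1:] X v = X v"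
  by (simp add: peval_pCons clinear_0)

lemma peval_linear: "clinear_map X \<Longrightarrow> clinear_map (peval p X)"
proof (induction p rule: pCons_induct)
  case 0 then show ?case by (simp add: clinear_iff)
next
  case (pCons a p)
  then show ?case
    by (auto simp: clinear_iff peval_pCons vector_add_ldistrib vector_smult_assoc mult.commute)
qed

lemma peval_add: "clinear_map X \<Longrightarrow> peval (p + q) X v = peval p X v + peval q X v"
proof (induction p arbitrary: q v rule: pCons_induct)
  case 0 then show ?case by simp
next
  case (pCons a p)
  show ?case
  proof (cases q rule: pCons_cases)
    case (pCons b q')
    have "peval (p + q') X v = peval p X v + peval q' X v" using pCons.IH pCons.prems by blast
    then show ?thesis using pCons.prems \<open>q = pCons b q'\<close>
      by (simp add: peval_pCons clinear_add vector_sadd_rdistrib add_ac)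
  qed
qed

lemma peval_smult: "clinear_map X \<Longrightarrow> peval (smult c p) X v = c *s peval p X v"
proof (induction p arbitrary: v rule: pCons_induct)
  case 0 then show ?case by simp
next
  case (pCons a p)
  then show ?case
    by (simp add: peval_pCons clinear_scale vector_add_ldistrib vector_smult_assoc)
qed

lemma peval_mult: "clinear_map X \<Longrightarrow> peval (p * q) X v = peval p X (peval q X v)"
proof (induction p arbitrary: v rule: pCons_induct)
  case 0 then show ?case by simp
next
  case (pCons a p)
  then show ?case
    by (simp add: peval_pCons peval_add peval_smult mult_pCons_left clinear_0)
qed

lemma peval_diff: "clinear_map X \<Longrightarrow> peval (p - q) X v = peval p X v - peval q X v"
proof -
  assume X: "clinear_map X"
  have "peval (p - q) X v + peval q X v = peval p X v"
    using peval_add[OF X, of "p - q" q v] by simp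
  then show ?thesis by (metis add_diff_cancel)
qed

lemma peval_comm:
  assumes "clinear_map X" "clinear_map Y" "\<And>v. Y (X v) = X (Y v)"
  shows "peval p X (Y v) = Y (peval p X v)"
  using assms
proof (induction p arbitrary: v rule: pCons_induct)
  case 0 then show ?case by (simp add: clinear_0)
next
  case (pCons a p)
  then show ?case by (simp add: peval_pCons clinear_add clinear_scale)
qed

lemma peval_eigen:
  assumes "clinear_map X" "X v = z *s v"
  shows "peval p X v = poly p z *s v"
  using assms
proof (induction p rule: pCons_induct)
  case 0 then show ?case by simp
next
  case (pCons a p)
  then show ?case by (simp add: peval_pCons clinear_scale vector_smult_assoc vector_sadd_rdistrib algebra_simps)
qed

lemma peval_monom: "clinear_map X \<Longrightarrow> peval (monom c i) X v = c *s (X ^^ i) v"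
proof (induction i arbitrary: v)
  case 0 then show ?case by (simp add: monom_0 peval_const)
next
  case (Suc i)
  then show ?case by (simp add: monom_Suc peval_pCons clinear_scale funpow_swap1)
qed

lemma peval_sum: "clinear_map X \<Longrightarrow> peval (\<Sum>i\<in>S. f i) X v = (\<Sum>i\<in>S. peval (f i) X v)"
  by (induction S rule: infinite_finite_induct) (auto simp: peval_add)

lemma peval_dvd_zero:
  assumes X: "clinear_map X" and d: "q dvd p" and z: "\<And>v. peval q X v = 0"
  shows "peval p X v = 0"
proof -
  from d obtain k where "p = k * q" by (metis dvd_def mult.commute)
  then show ?thesis using z X by (simp add: peval_mult peval_linear clinear_0)
qed



abbreviation lprod :: "complex list \<Rightarrow> complex poly" where
  "lprod L \<equiv> (\<Prod>z\<leftarrow>L. [:-z, 1:])"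

lemma poly_lprod_0: "poly (lprod L) x = 0 \<longleftrightarrow> x \<in> set L"
  by (induction L) auto

lemma sqrt_poly:
  assumes "\<forall>z\<in>set L. z \<notin> \<real>\<^sub>\<le>\<^sub>0"
  shows "\<exists>g. lprod L dvd g * g - [:0,1:] \<and> (\<forall>z\<in>set L. poly g z = csqrt z)"
  using assms
proof (induction L)
  case Nil
  show ?case by (intro exI[of _ 0]) simp
next
  case (Cons y L)
  from Cons obtain g1 where g1: "lprod L dvd g1 * g1 - [:0,1:]" and v1: "\<forall>z\<in>set L. poly g1 z = csqrt z"
    by auto
  from g1 obtain s where s: "g1 * g1 - [:0,1:] = lprod L * s" by (auto elim: dvdE)
  define q1 where "q1 = lprod L"
  define a where "a = poly q1 y"
  define b where "b = poly g1 y"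
  define sl where "sl = poly s y"
  have y0: "y \<notin> \<real>\<^sub>\<le>\<^sub>0" using Cons.prems by auto
  hence yne: "y \<noteq> 0" by auto
  have ab: "b * b - y = a * sl"
    using arg_cong[OF s, of "\<lambda>p. poly p y"] by (simp add: a_def b_def sl_def q1_def)
  define c where "c = (if a \<noteq> 0 then (csqrt y - b) / a else - sl / (2 * b))"
  define g where "g = g1 + [:c:] * q1"
  define F where "F = s + ([:c:] * g1 + [:c:] * g1) + [:c:] * [:c:] * q1"
  have sq: "csqrt y * csqrt y = y" using power2_csqrt[of y] by (simp add: power2_eq_square)
  have key: "poly F y = 0"
  proof (cases "a = 0")
    case False
    have "a * poly F y = b * b - y + 2 * c * a * b + c * c * a * a"
      using ab by (simp add: F_def a_def b_def sl_def algebra_simps)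
    also have "\<dots> = (b + c * a) * (b + c * a) - y" by (simp add: algebra_simps)
    also have "b + c * a = csqrt y" using False by (simp add: c_def)
    finally have "a * poly F y = 0" using sq by simp
    then show ?thesis using False by simp
  next
    case True
    then have "y \<in> set L" using poly_lprod_0[of L y] by (simp add: a_def q1_def)
    then have "b = csqrt y" using v1 by (simp add: b_def)
    then have "b \<noteq> 0" using yne by simp
    then show ?thesis using True by (simp add: F_def c_def a_def b_def sl_def field_simps)
  qed
  have eq: "g * g - [:0,1:] = q1 * F"
  proof -
    have "g * g - [:0,1:] = (g1 * g1 - [:0,1:]) + q1 * (([:c:] * g1 + [:c:] * g1) + [:c:] * [:c:] * q1)"
      unfolding g_def by algebra
    also have "\<dots> = q1 * F" unfolding s F_def q1_def by algebra
    finally show ?thesis .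
  qed
  have "[:-y,1:] dvd F" using key poly_eq_0_iff_dvd by blast
  then have "[:-y,1:] * q1 dvd F * q1" by (rule mult_dvd_mono) simp
  then have d: "lprod (y # L) dvd g * g - [:0,1:]" using eq by (simp add: q1_def mult.commute)
  have "\<forall>z\<in>set (y # L). poly g z = csqrt z"
  proof
    fix z assume z: "z \<in> set (y # L)"
    show "poly g z = csqrt z"
    proof (cases "z \<in> set L")
      case True
      then have "poly q1 z = 0" using poly_lprod_0 by (simp add: q1_def)
      then show ?thesis using v1 True by (simp add: g_def)
    next
      case False
      then have zy: "z = y" using z by simp
      show ?thesis
      proof (cases "a = 0")
        case True
        then have "y \<in> set L" using poly_lprod_0[of L y] by (simp add: a_def q1_def)
        then show ?thesis using zy False by simp
      next
        case False
        then show ?thesis using zy by (simp add: g_def c_def a_def b_def)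
      qed
    qed
  qed
  with d show ?case by blast
qed

lemma prod_kernel:
  assumes X: "clinear_map X" and F: "clinear_map F" and comm: "\<And>v. F (X v) = X (F v)"
    and eig: "\<And>z v. z \<in> set L \<Longrightarrow> X v = z *s v \<Longrightarrow> F v = 0 \<Longrightarrow> v = 0"
  shows "peval (lprod L) X v = 0 \<Longrightarrow> F v = 0 \<Longrightarrow> v = 0"
  using eig
proof (induction L arbitrary: v)
  case Nil
  then show ?case using peval_1[OF X, of v] by simp
next
  case (Cons z L)
  define u where "u = X v - z *s v"
  have pu: "peval [:-z,1:] X v = u" by (simp add: u_def peval_pCons[OF X] clinear_0[OF X])
  have "peval (lprod L) X u = peval (lprod L * [:-z,1:]) X v"
    by (simp only: peval_mult[OF X] pu)
  also have "\<dots> = 0" using Cons.prems(1) by (simp add: mult.commute)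
  finally have 1: "peval (lprod L) X u = 0" .
  have 2: "F u = 0" using Cons.prems(2) by (simp add: u_def clinear_diff[OF F] clinear_scale[OF F] comm clinear_0[OF X])
  have "u = 0" using Cons.IH[OF 1 2] Cons.prems(3) by auto
  then have "X v = z *s v" by (simp add: u_def)
  then show ?case using Cons.prems by auto
qed

lemma remove_zero_roots:
  assumes X: "clinear_map X" and inj: "inj X"
  shows "(\<And>v. peval (F * lprod L) X v = 0) \<Longrightarrow> peval (F * lprod (filter (\<lambda>z. z \<noteq> 0) L)) X v = 0"
proof (induction L arbitrary: F v)
  case Nil then show ?case by simp
next
  case (Cons z L)
  show ?case
  proof (cases "z = 0")
    case True
    have "\<And>v. X (peval (F * lprod L) X v) = 0"
    proof -
      fix v
      have "X (peval (F * lprod L) X v) = peval ([:0,1:] * (F * lprod L)) X v"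
        by (simp only: peval_mult[OF X] peval_x[OF X])
      also have "\<dots> = peval (F * lprod (z # L)) X v" using True by (simp add: algebra_simps)
      finally show "X (peval (F * lprod L) X v) = 0" using Cons.prems by simp
    qed
    then have "\<And>v. peval (F * lprod L) X v = 0"
      using inj clinear_0[OF X] by (metis injD)
    then show ?thesis using Cons.IH True by simp
  next
    case False
    have "\<And>v. peval ((F * [:-z,1:]) * lprod L) X v = 0" using Cons.prems by (simp add: algebra_simps)
    then have "peval ((F * [:-z,1:]) * lprod (filter (\<lambda>z. z \<noteq> 0) L)) X v = 0" using Cons.IH by blast
    then show ?thesis using False by (simp add: algebra_simps)
  qed
qed

lemma peval_lprod_scale:
  assumes X: "clinear_map X"
  shows "peval (\<Prod>z\<leftarrow>L. [:-(w*z), 1:]) (\<lambda>v. w *s X v) v = w ^ length L *s peval (lprod L) X v"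
proof (induction L arbitrary: v)
  case Nil
  have Y: "clinear_map (\<lambda>v. w *s X v)" using X by (simp add: clinear_iff vector_add_ldistrib vector_smult_assoc mult.commute)
  show ?case using peval_1[OF X] peval_1[OF Y] by simp
next
  case (Cons z L)
  have Y: "clinear_map (\<lambda>v. w *s X v)" using X by (simp add: clinear_iff vector_add_ldistrib vector_smult_assoc mult.commute)
  have "peval (\<Prod>z\<leftarrow>z # L. [:-(w*z), 1:]) (\<lambda>v. w *s X v) v
       = peval [:-(w*z), 1:] (\<lambda>v. w *s X v) (w ^ length L *s peval (lprod L) X v)"
    by (simp only: list.map prod_list.Cons peval_mult[OF Y] Cons.IH)
  also have "\<dots> = w ^ length (z # L) *s peval [:-z,1:] X (peval (lprod L) X v)"
    by (simp add: peval_pCons[OF Y] peval_pCons[OF X] clinear_0[OF X] clinear_scale[OF X] vector_smult_assoc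
        vector_add_ldistrib algebra_simps)
  also have "\<dots> = w ^ length (z # L) *s peval (lprod (z # L)) X v"
    by (simp only: list.map prod_list.Cons peval_mult[OF X])
  finally show ?case .
qed

lemma poly_factor_list:
  assumes "p \<noteq> (0 :: complex poly)"
  shows "\<exists>L c. c \<noteq> 0 \<and> p = smult c (lprod L)"
proof -
  obtain roots where roots: "mset roots = proots p"
    using ex_mset by blast
  have "p = smult (lead_coeff p) (\<Prod>x\<in>#proots p. [:-x, 1:])"
    by (rule complex_poly_decompose_multiset [symmetric])
  also have "(\<Prod>x\<in>#proots p. [:-x, 1:]) = (\<Prod>x\<leftarrow>roots. [:-x, 1:])"
    by (subst prod_mset_prod_list [symmetric]) (simp add: roots)
  finally have "p = smult (lead_coeff p) (lprod roots)" .
  then show ?thesis using assms by (intro exI[of _ roots] exI[of _ "lead_coeff p"]) auto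
qed

lemma a2: "inj_on cis {0<..<1::real} \<Longrightarrow> infinite (cis ` {0<..<1::real})"
proof
  assume i: "inj_on cis {0<..<1::real}" and f: "finite (cis ` {0<..<1::real})"
  have "finite {0<..<1::real}" by (rule finite_imageD[OF f i])
  then show False using infinite_Ioo[of "0::real" 1] by simp
qed
lemma a3: "finite (B::complex set) \<Longrightarrow> infinite (S::complex set) \<Longrightarrow> S - B \<noteq> {}"
proof
  assume "finite B" "infinite S" "S - B = {}"
  then have "S \<subseteq> B" by blast
  then show False using \<open>finite B\<close> \<open>infinite S\<close> finite_subset by blast
qed
lemma good_unit:
  fixes M :: "complex set"
  assumes "finite M" "0 \<notin> M"
  shows "\<exists>w. norm w = 1 \<and> (\<forall>m\<in>M. w * m \<notin> \<real>\<^sub>\<le>\<^sub>0)"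
proof -
  define B where "B = (\<lambda>m. - complex_of_real (norm m) / m) ` M"
  have "inj_on cis {0<..<1::real}"
  proof (rule inj_onI)
    fix s t :: real assume "s \<in> {0<..<1}" "t \<in> {0<..<1}" "cis s = cis t"
    then have "s \<in> {-pi<..pi}" "t \<in> {-pi<..pi}" "cis s = cis t" using pi_gt3 by auto
    then show "s = t" using Arg_cis by metis
  qed
  then have "infinite (cis ` {0<..<1::real})" by (rule a2)
  moreover have "finite B" using assms by (simp add: B_def)
  ultimately have "cis ` {0<..<1::real} - B \<noteq> {}" using a3 by blast
  then obtain w where w: "w \<in> cis ` {0<..<1::real}" "w \<notin> B"
    by blast
  have nw: "norm w = 1" using w(1) by clarsimp
  have "\<forall>m\<in>M. w * m \<notin> \<real>\<^sub>\<le>\<^sub>0"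
  proof (intro ballI notI)
    fix m assume m: "m \<in> M" and bad: "w * m \<in> \<real>\<^sub>\<le>\<^sub>0"
    have m0: "m \<noteq> 0" using m assms by auto
    define r where "r = Re (w * m)"
    have r: "w * m = complex_of_real r" "r \<le> 0"
      using bad unfolding complex_nonpos_Reals_iff r_def by (auto simp: complex_eq_iff)
    have "norm (w * m) = norm m" using nw by (simp add: norm_mult)
    then have "\<bar>r\<bar> = norm m" using r by simp
    then have "r = - norm m" using r by simp
    then have "w = - complex_of_real (norm m) / m" using r m0 by (simp add: field_simps)
    then show False using w m by (auto simp: B_def)
  qed
  with nw show ?thesis by blast
qed



lemma cR: "r *\<^sub>R (z::complex) = complex_of_real r * z" by (simp add: scaleR_conv_of_real)

lemma scaleR_vec: "r *\<^sub>R (x :: complex^'n) = complex_of_real r *s x"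
  unfolding vec_eq_iff by (simp only: vector_scaleR_component vector_smult_component cR) simp

lemma lin_bij:
  fixes f :: "complex^'n \<Rightarrow> complex^'n"
  assumes add: "\<And>x y. f (x + y) = f x + f y"
    and sc: "\<And>(r::real) x. f (complex_of_real r *s x) = complex_of_real r *s f x"
    and inj: "inj f"
  shows "bij f"
proof -
  have "linear f" by (rule linearI) (simp_all add: add scaleR_vec sc)
  then have "surj f" using inj linear_injective_imp_surjective by blast
  with inj show ?thesis by (simp add: bij_def)
qed

lemma clinear_bij:
  fixes f :: "complex^'n \<Rightarrow> complex^'n"
  assumes "clinear_map f" "inj f" shows "bij f"
  using assms by (intro lin_bij) (auto simp: clinear_add clinear_scale)

lemma annihilate:
  fixes X :: "complex^'n \<Rightarrow> complex^'n"
  assumes X: "clinear_map X"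
  shows "\<exists>p. p \<noteq> 0 \<and> (\<forall>v. peval p X v = 0)"
proof -
  define D where "D = DIM((complex^'n)^'n)"
  define f :: "nat \<Rightarrow> (complex^'n)^'n" where "f i = (\<chi> j. (X ^^ i) (axis j 1))" for i
  have "\<exists>c. (\<exists>i\<le>D. c i \<noteq> 0) \<and> (\<Sum>i\<le>D. c i *\<^sub>R f i) = 0"
  proof (cases "inj_on f {..D}")
    case True
    have "card (f ` {..D}) = D + 1" using True by (simp add: card_image)
    then have "\<not> (finite (f ` {..D}) \<and> card (f ` {..D}) \<le> DIM((complex^'n)^'n))" by (simp add: D_def)
    then have "dependent (f ` {..D})" using independent_bound by blast
    then obtain u where u: "\<exists>v\<in>f ` {..D}. u v \<noteq> 0" "(\<Sum>v\<in>f ` {..D}. u v *\<^sub>R v) = 0"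
      using real_vector.dependent_finite[of "f ` {..D}"] by auto
    have "(\<Sum>i\<le>D. u (f i) *\<^sub>R f i) = (\<Sum>v\<in>f ` {..D}. u v *\<^sub>R v)"
      using True by (simp add: sum.reindex)
    then show ?thesis using u by (intro exI[of _ "\<lambda>i. u (f i)"]) auto
  next
    case False
    then obtain i j where ij: "i \<le> D" "j \<le> D" "i \<noteq> j" "f i = f j"
      unfolding inj_on_def by auto
    define c where "c k = (if k = i then 1 else if k = j then -1 else (0::real))" for k
    have "(\<Sum>k\<le>D. c k *\<^sub>R f k) = (\<Sum>k\<in>{i,j}. c k *\<^sub>R f k)"
      by (rule sum.mono_neutral_right) (auto simp: c_def ij)
    also have "\<dots> = 0" using ij by (simp add: c_def)
    finally show ?thesis using ij by (intro exI[of _ c]) (auto simp: c_def)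
  qed
  then obtain c where c: "\<exists>i\<le>D. c i \<noteq> 0" "(\<Sum>i\<le>D. c i *\<^sub>R f i) = 0" by blast
  define p where "p = (\<Sum>i\<le>D. monom (complex_of_real (c i)) i)"
  have coeff: "coeff p k = (if k \<le> D then complex_of_real (c k) else 0)" for k
    by (simp add: p_def coeff_sum coeff_monom)
  have "p \<noteq> 0" using c(1) coeff by (metis coeff_0 of_real_eq_0_iff)
  have basis: "peval p X (axis j 1) = 0" for j
  proof -
    have "peval p X (axis j 1) = (\<Sum>i\<le>D. complex_of_real (c i) *s (X ^^ i) (axis j 1))"
      by (simp add: p_def peval_sum[OF X] peval_monom[OF X])
    also have "\<dots> = 0"
    proof (subst vec_eq_iff, intro allI)
      fix k
      have "(\<Sum>i\<le>D. c i *\<^sub>R f i) $ j $ k = 0" using c(2) by simp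
      moreover have "(\<Sum>i\<le>D. c i *\<^sub>R f i) $ j $ k = (\<Sum>i\<le>D. complex_of_real (c i) * (X ^^ i) (axis j 1) $ k)"
        by (simp only: sum_component vector_scaleR_component f_def vec_lambda_beta cR)
      ultimately show "(\<Sum>i\<le>D. complex_of_real (c i) *s (X ^^ i) (axis j 1)) $ k = 0 $ k"
        by simp
    qed
    finally show ?thesis .
  qed
  have "peval p X v = 0" for v
  proof -
    have "peval p X v = peval p X (\<Sum>j\<in>UNIV. (v $ j) *s axis j 1)" by (simp add: basis_expansion)
    also have "\<dots> = 0"
      using peval_linear[OF X, of p] by (simp add: clinear_sum clinear_scale basis)
    finally show ?thesis .
  qed
  with \<open>p \<noteq> 0\<close> show ?thesis by blast
qed

lemma herm_left: "hermitian_form l \<Longrightarrow> l (z *s u + v) w = z * l u w + l v w"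
  unfolding hermitian_form_def by blast
lemma herm_right: "hermitian_form l \<Longrightarrow> l w (z *s u + v) = cnj z * l w u + l w v"
  unfolding hermitian_form_def by blast
lemma herm_0l: "hermitian_form l \<Longrightarrow> l 0 w = 0"
  using herm_left[of l 1 0 0 w] by simp
lemma herm_0r: "hermitian_form l \<Longrightarrow> l w 0 = 0"
  using herm_right[of l w 1 0 0] by simp
lemma herm_scl: "hermitian_form l \<Longrightarrow> l (z *s u) w = z * l u w"
  using herm_left[of l z u 0 w] herm_0l[of l w] by simp
lemma herm_scr: "hermitian_form l \<Longrightarrow> l w (z *s u) = cnj z * l w u"
  using herm_right[of l w z u 0] herm_0r[of l w] by simp
lemma herm_addl: "hermitian_form l \<Longrightarrow> l (u + v) w = l u w + l v w"
  using herm_left[of l 1 u v w] by simp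
lemma herm_addr: "hermitian_form l \<Longrightarrow> l w (u + v) = l w u + l w v"
  using herm_right[of l w 1 u v] by simp

lemma anti_0: "antilinear_map A \<Longrightarrow> A 0 = 0"
proof -
  assume a: "antilinear_map A"
  have "A (1 *s 0 + 0) = cnj 1 *s A 0 + A 0" using a unfolding antilinear_map_def by blast
  then show ?thesis by simp
qed
lemma anti_add: "antilinear_map A \<Longrightarrow> A (v + w) = A v + A w"
proof -
  assume a: "antilinear_map A"
  have "A (1 *s v + w) = cnj 1 *s A v + A w" using a unfolding antilinear_map_def by blast
  then show ?thesis by simp
qed
lemma anti_scale: "antilinear_map A \<Longrightarrow> A (z *s v) = cnj z *s A v"
proof -
  assume a: "antilinear_map A"
  have "A (z *s v + 0) = cnj z *s A v + A 0" using a unfolding antilinear_map_def by blast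
  then show ?thesis using anti_0[OF a] by simp
qed



lemma adj_lemma:
  assumes herm: "hermitian_form l" and X: "clinear_map X" and Xi: "clinear_map Xi"
    and XXi: "\<And>v. X (Xi v) = v" and unit: "\<And>v w. l (X v) (X w) = l v w"
  shows "l (peval p X v) w = l v (peval (map_poly cnj p) Xi w)"
proof (induction p arbitrary: v w rule: pCons_induct)
  case 0
  then show ?case by (simp add: herm_0l[OF herm] herm_0r[OF herm])
next
  case (pCons a p)
  have Xl: "l (X y) u = l y (Xi u)" for y u using unit[of y "Xi u"] by (simp add: XXi)
  have "l (peval (pCons a p) X v) w = a * l v w + l (X (peval p X v)) w"
    by (simp add: peval_pCons[OF X] herm_left[OF herm])
  also have "\<dots> = a * l v w + l v (peval (map_poly cnj p) Xi (Xi w))"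
    by (simp add: Xl pCons.IH)
  also have "peval (map_poly cnj p) Xi (Xi w) = Xi (peval (map_poly cnj p) Xi w)"
    by (rule peval_comm[OF Xi Xi]) simp
  also have "a * l v w + l v (Xi (peval (map_poly cnj p) Xi w)) = l v (peval (map_poly cnj (pCons a p)) Xi w)"
    by (simp add: map_poly_pCons peval_pCons[OF Xi] herm_right[OF herm])
  finally show ?case .
qed

lemma A_lemma:
  assumes anti: "antilinear_map A" and X: "clinear_map X" and Xi: "clinear_map Xi"
    and XA: "\<And>u. X (A u) = A (Xi u)"
  shows "peval p X (A v) = A (peval (map_poly cnj p) Xi v)"
proof (induction p arbitrary: v rule: pCons_induct)
  case 0
  then show ?case by (simp add: anti_0[OF anti])
next
  case (pCons a p)
  then show ?case
    by (simp add: peval_pCons[OF X] peval_pCons[OF Xi] map_poly_pCons anti_add[OF anti] anti_scale[OF anti] XA)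
qed

lemma aux_div: "(x::real) / x^2 \<le> 0 \<Longrightarrow> x \<le> 0"
proof (rule ccontr)
  assume a: "x / x^2 \<le> 0" "\<not> x \<le> 0"
  then have x0: "x > 0" by simp
  then have "x^2 > 0" by simp
  then have "x / x^2 > 0" using x0 by (rule divide_pos_pos[rotated])
  then show False using a by linarith
qed

lemma good_inv: "z \<notin> \<real>\<^sub>\<le>\<^sub>0 \<Longrightarrow> inverse (cnj z) \<notin> \<real>\<^sub>\<le>\<^sub>0"
proof
  assume z: "z \<notin> \<real>\<^sub>\<le>\<^sub>0" and b: "inverse (cnj z) \<in> \<real>\<^sub>\<le>\<^sub>0"
  have z0: "z \<noteq> 0" using z by auto
  have "cnj z = inverse (inverse (cnj z))" by simp
  then have "cnj z \<in> \<real>\<^sub>\<le>\<^sub>0" using b z0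
    by (auto simp: complex_nonpos_Reals_iff Re_inverse Im_inverse complex_eq_iff intro: aux_div)
  then show False using z by (auto simp: complex_nonpos_Reals_iff)
qed

lemma csqrt_key:
  assumes z: "z \<notin> \<real>\<^sub>\<le>\<^sub>0"
  shows "cnj (csqrt (inverse (cnj z))) * csqrt z = 1"
proof -
  have cz: "cnj z \<notin> \<real>\<^sub>\<le>\<^sub>0" using z by (auto simp: complex_nonpos_Reals_iff)
  have "csqrt (inverse (cnj z)) = inverse (csqrt (cnj z))" by (rule csqrt_inverse[OF cz])
  then have "cnj (csqrt (inverse (cnj z))) = inverse (cnj (csqrt (cnj z)))" by simp
  also have "cnj (csqrt (cnj z)) = csqrt (cnj (cnj z))" by (rule cnj_csqrt[OF cz])
  finally have "cnj (csqrt (inverse (cnj z))) = inverse (csqrt z)" by simp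
  moreover have "csqrt z \<noteq> 0" using z by auto
  ultimately show ?thesis by simp
qed

lemma core:
  fixes l :: "complex^'n \<Rightarrow> complex^'n \<Rightarrow> complex" and A X :: "complex^'n \<Rightarrow> complex^'n"
  assumes herm: "hermitian_form l" and anti: "antilinear_map A" and Ainj: "inj A"
    and X: "clinear_map X" and Xbij: "bij X"
    and unit: "\<And>v w. l (X v) (X w) = l v w"
    and XAX: "\<And>v. X (A (X v)) = A v"
    and ann: "\<And>v. peval (lprod L) X v = 0"
    and good: "\<forall>z\<in>set L. z \<notin> \<real>\<^sub>\<le>\<^sub>0"
  shows "\<exists>G. clinear_map G \<and> (\<forall>v. G (G v) = X v) \<and> (\<forall>v w. l (G v) (G w) = l v w)
             \<and> (\<forall>v. G (A (G v)) = A v)"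
proof -
  define Xi where "Xi = inv X"
  have XXi: "X (Xi v) = v" for v using Xbij by (simp add: Xi_def bij_def surj_f_inv_f)
  have XiX: "Xi (X v) = v" for v using Xbij by (simp add: Xi_def bij_def inv_f_f)
  have Xi: "clinear_map Xi"
    unfolding clinear_iff
  proof (intro conjI allI)
    fix x y
    have "X (Xi (x + y)) = X (Xi x + Xi y)" by (simp add: XXi clinear_add[OF X])
    then show "Xi (x + y) = Xi x + Xi y" by (metis XiX)
  next
    fix c x
    have "X (Xi (c *s x)) = X (c *s Xi x)" by (simp add: XXi clinear_scale[OF X])
    then show "Xi (c *s x) = c *s Xi x" by (metis XiX)
  qed
  define L2 where "L2 = L @ map (\<lambda>z. inverse (cnj z)) L"
  have good2: "\<forall>z\<in>set L2. z \<notin> \<real>\<^sub>\<le>\<^sub>0" using good good_inv by (auto simp: L2_def)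
  obtain g where g: "lprod L2 dvd g * g - [:0,1:]" and gv: "\<forall>z\<in>set L2. poly g z = csqrt z"
    using sqrt_poly[OF good2] by blast
  have ann2: "peval (lprod L2) X v = 0" for v
  proof -
    have "lprod L2 = lprod (map (\<lambda>z. inverse (cnj z)) L) * lprod L" by (simp add: L2_def mult.commute)
    then show ?thesis using ann by (simp add: peval_mult[OF X] clinear_0[OF peval_linear[OF X]])
  qed
  define G where "G = peval g X"
  define H where "H = peval (map_poly cnj g) Xi"
  have G: "clinear_map G" unfolding G_def by (rule peval_linear[OF X])
  have H: "clinear_map H" unfolding H_def by (rule peval_linear[OF Xi])
  have GG: "G (G v) = X v" for v
  proof -
    have "peval (g * g - [:0,1:]) X v = 0" by (rule peval_dvd_zero[OF X g ann2])
    then show ?thesis by (simp add: G_def peval_diff[OF X] peval_mult[OF X] peval_x[OF X])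
  qed
  have XA: "X (A u) = A (Xi u)" for u using XAX[of "Xi u"] by (simp add: XXi)
  have GA: "G (A v) = A (H v)" for v unfolding G_def H_def by (rule A_lemma[OF anti X Xi XA])
  have GXi: "G (Xi v) = Xi (G v)" for v unfolding G_def by (rule peval_comm[OF X Xi]) (simp add: XXi XiX)
  have GX: "G (X v) = X (G v)" for v unfolding G_def by (rule peval_comm[OF X X]) simp
  have HG: "H (G v) = G (H v)" for v unfolding H_def by (rule peval_comm[OF Xi G]) (simp add: GXi)
  have HX: "H (X v) = X (H v)" for v unfolding H_def by (rule peval_comm[OF Xi X]) (simp add: XXi XiX)
  have HH: "H (H v) = Xi v" for v
  proof -
    have "A (H (H v)) = G (G (A v))" by (simp add: GA)
    also have "\<dots> = A (Xi v)" by (simp add: GG XA)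
    finally show ?thesis using Ainj by (simp add: inj_eq)
  qed
  define E where "E v = H (G v)" for v
  have E: "clinear_map E" unfolding E_def using clinear_comp[OF H G] .
  have EE: "E (E v) = v" for v
  proof -
    have "G (H (G v)) = H (G (G v))" by (simp add: HG)
    then have "E (E v) = H (H (G (G v)))" by (simp add: E_def)
    also have "\<dots> = v" by (simp add: GG HH XiX)
    finally show ?thesis .
  qed
  have EX: "E (X v) = X (E v)" for v unfolding E_def by (simp add: GX HX)
  define F where "F v = E v + v" for v
  have F: "clinear_map F" using E by (simp add: F_def clinear_iff vector_add_ldistrib)
  have Finj: "v = 0" if "F v = 0" for v
  proof (rule prod_kernel[OF X F _ _ ann that])
    show "F (X v) = X (F v)" for v by (simp add: F_def EX clinear_add[OF X])
  next
    fix z v assume z: "z \<in> set L" and eig: "X v = z *s v" and Fv: "F v = 0"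
    have zg: "z \<notin> \<real>\<^sub>\<le>\<^sub>0" using good z by auto
    then have z0: "z \<noteq> 0" by auto
    have Gv: "G v = poly g z *s v" unfolding G_def by (rule peval_eigen[OF X eig])
    have "X (inverse z *s v) = v" using z0 by (simp add: clinear_scale[OF X] eig vector_smult_assoc)
    then have "Xi v = inverse z *s v" by (metis XiX)
    then have Hv: "H v = poly (map_poly cnj g) (inverse z) *s v" unfolding H_def by (rule peval_eigen[OF Xi])
    have "poly (map_poly cnj g) (inverse z) * poly g z = 1"
    proof -
      have "inverse (cnj z) \<in> set L2" "z \<in> set L2" using z by (auto simp: L2_def)
      then have "poly g (inverse (cnj z)) = csqrt (inverse (cnj z))" "poly g z = csqrt z" using gv by auto
      then show ?thesis using csqrt_key[OF zg] by (simp add: complex_cnj_inverse)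
    qed
    then have "E v = v" by (simp add: E_def Gv Hv clinear_scale[OF H] vector_smult_assoc mult.commute)
    then have "F v = 2 *s v" by (simp add: F_def vec_eq_iff)
    then show "v = 0" using Fv by simp
  qed
  have Eid: "E v = v" for v
  proof -
    have "F (E v - v) = 0" by (simp add: F_def clinear_diff[OF E] EE)
    then have "E v - v = 0" by (rule Finj)
    then show ?thesis by simp
  qed
  have U: "l (G v) (G w) = l v w" for v w
  proof -
    have "l (G v) (G w) = l v (H (G w))" unfolding G_def H_def
      by (rule adj_lemma[OF herm X Xi XXi unit])
    then show ?thesis using Eid by (simp add: E_def)
  qed
  have GAG: "G (A (G v)) = A v" for v using Eid by (simp add: GA E_def)
  show ?thesis using G GG U GAG by blast
qed



lemma inv_clinear:
  fixes f :: "complex^'n \<Rightarrow> complex^'n"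
  assumes f: "clinear_map f" and b: "bij f"
  shows "clinear_map (inv f)"
proof -
  have ff: "f (inv f v) = v" for v using b by (simp add: bij_def surj_f_inv_f)
  have fi: "inv f (f v) = v" for v using b by (simp add: bij_def inv_f_f)
  show ?thesis unfolding clinear_iff
  proof (intro conjI allI)
    fix x y
    have "f (inv f (x + y)) = f (inv f x + inv f y)" by (simp add: ff clinear_add[OF f])
    then show "inv f (x + y) = inv f x + inv f y" by (metis fi)
  next
    fix c x
    have "f (inv f (c *s x)) = f (c *s inv f x)" by (simp add: ff clinear_scale[OF f])
    then show "inv f (c *s x) = c *s inv f x" by (metis fi)
  qed
qed

lemma inv_anti:
  fixes f :: "complex^'n \<Rightarrow> complex^'n"
  assumes f: "antilinear_map f" and b: "bij f"
  shows "antilinear_map (inv f)"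
proof -
  have ff: "f (inv f v) = v" for v using b by (simp add: bij_def surj_f_inv_f)
  have fi: "inv f (f v) = v" for v using b by (simp add: bij_def inv_f_f)
  show ?thesis unfolding antilinear_map_def
  proof (intro allI)
    fix z v w
    have "f (inv f (z *s v + w)) = f (cnj z *s inv f v + inv f w)"
      by (simp add: ff anti_add[OF f] anti_scale[OF f])
    then show "inv f (z *s v + w) = cnj z *s inv f v + inv f w" by (metis fi)
  qed
qed

theorem mainTheorem2:
  fixes l l' :: "complex ^ 'n \<Rightarrow> complex ^ 'n \<Rightarrow> complex"
    and A A' :: "complex ^ 'n \<Rightarrow> complex ^ 'n"
  assumes "hermitian_form l" "nondegenerate l"
    and "hermitian_form l'" "nondegenerate l'"
    and "antilinear_map A" "nonsingular A" "l_self_adjoint_anti l A"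
    and "antilinear_map A'" "nonsingular A'" "l_self_adjoint_anti l' A'"
    and "pair_equiv l (A \<circ> A) l' (A' \<circ> A')"
  shows "pair_equiv l A l' A'"
proof -
  note herm = assms(1) and herm' = assms(3) and anti = assms(5) and anti' = assms(8)
  obtain \<phi> where \<phi>: "clinear_map \<phi>" and \<phi>b: "bij \<phi>" and \<phi>l: "\<And>v w. l' (\<phi> v) (\<phi> w) = l v w"
    and \<phi>A: "\<And>v. \<phi> (A (A v)) = A' (A' (\<phi> v))"
    using assms(11) unfolding pair_equiv_def by auto
  have Aself: "\<And>v w. l (A v) w = l (A w) v" using assms(7) unfolding l_self_adjoint_anti_def by blast
  have A'self: "\<And>v w. l' (A' v) w = l' (A' w) v" using assms(10) unfolding l_self_adjoint_anti_def by blast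
  define \<phi>i where "\<phi>i = inv \<phi>"
  have \<phi>\<phi>i: "\<phi> (\<phi>i y) = y" for y using \<phi>b by (simp add: \<phi>i_def bij_def surj_f_inv_f)
  have \<phi>i\<phi>: "\<phi>i (\<phi> v) = v" for v using \<phi>b by (simp add: \<phi>i_def bij_def inv_f_f)
  have \<phi>i: "clinear_map \<phi>i" unfolding \<phi>i_def by (rule inv_clinear[OF \<phi> \<phi>b])
  define C where "C v = \<phi>i (A' (\<phi> v))" for v
  have Canti: "antilinear_map C" unfolding antilinear_map_def
    by (simp add: C_def clinear_add[OF \<phi>] clinear_scale[OF \<phi>] anti_add[OF anti'] anti_scale[OF anti']
        clinear_add[OF \<phi>i] clinear_scale[OF \<phi>i])
  have l\<phi>i: "l (\<phi>i y) w = l' y (\<phi> w)" for y w using \<phi>l[of "\<phi>i y" w] by (simp add: \<phi>\<phi>i)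
  have Cself: "l (C v) w = l (C w) v" for v w by (simp add: C_def l\<phi>i A'self)
  have CC: "C (C v) = A (A v)" for v by (simp add: C_def \<phi>\<phi>i \<phi>A[symmetric] \<phi>i\<phi>)
  have Ainj: "inj A"
  proof (rule injI)
    fix v w assume "A v = A w"
    moreover have "A (v + (-1) *s w) = A v + cnj (-1) *s A w"
      by (simp only: anti_add[OF anti] anti_scale[OF anti])
    ultimately have "A (v - w) = 0" by (simp add: vector_sneg_minus1[symmetric])
    then have "v - w = 0" using assms(6) unfolding nonsingular_def by blast
    then show "v = w" by simp
  qed
  have Ab: "bij A"
    by (rule lin_bij) (simp_all add: anti_add[OF anti] anti_scale[OF anti] Ainj)
  define Ai where "Ai = inv A"
  have AAi: "A (Ai y) = y" for y using Ab by (simp add: Ai_def bij_def surj_f_inv_f)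
  have AiA: "Ai (A v) = v" for v using Ab by (simp add: Ai_def bij_def inv_f_f)
  have Ai: "antilinear_map Ai" unfolding Ai_def by (rule inv_anti[OF anti Ab])
  have Cinj: "C v = C w \<Longrightarrow> v = w" for v w
  proof -
    assume "C v = C w"
    then have "A (A v) = A (A w)" by (metis CC)
    then show "v = w" using Ainj by (simp add: inj_eq)
  qed
  define U where "U v = C (Ai v)" for v
  have U: "clinear_map U" unfolding clinear_iff
    by (simp add: U_def anti_add[OF Ai] anti_scale[OF Ai] anti_add[OF Canti] anti_scale[OF Canti])
  have Uinj: "inj U"
  proof (rule injI)
    fix v w assume "U v = U w"
    then have "Ai v = Ai w" unfolding U_def by (rule Cinj)
    then show "v = w" by (metis AAi)
  qed
  have UA: "U (A y) = C y" for y by (simp add: U_def AiA)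
  have Uunit: "l (U v) (U w) = l v w" for v w
  proof -
    have "l (C x) (C y) = l (A x) (A y)" for x y
    proof -
      have "l (C x) (C y) = l (C (C y)) x" by (rule Cself)
      also have "\<dots> = l (A (A y)) x" by (simp add: CC)
      also have "\<dots> = l (A x) (A y)" by (rule Aself)
      finally show ?thesis .
    qed
    then show ?thesis by (simp add: U_def AAi)
  qed
  have UAU: "U (A (U v)) = A v" for v by (simp add: U_def AiA CC AAi)
  obtain p where p0: "p \<noteq> 0" and pU: "\<And>v. peval p U v = 0" using annihilate[OF U] by blast
  obtain L0 c where c0: "c \<noteq> 0" and pL: "p = smult c (lprod L0)" using poly_factor_list[OF p0] by blast
  have ann0: "peval (1 * lprod L0) U v = 0" for v
    using pU[of v] c0 by (simp add: pL peval_smult[OF U])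
  define L1 where "L1 = filter (\<lambda>z. z \<noteq> 0) L0"
  have ann1: "peval (lprod L1) U v = 0" for v
    using remove_zero_roots[OF U Uinj, of 1 L0 v] ann0 by (simp add: L1_def)
  obtain w where nw: "norm w = 1" and wg: "\<forall>m\<in>set L1. w * m \<notin> \<real>\<^sub>\<le>\<^sub>0"
    using good_unit[of "set L1"] by (auto simp: L1_def)
  have wcw: "w * cnj w = 1" using complex_norm_square[of w] nw by simp
  define X where "X v = w *s U v" for v
  have X: "clinear_map X" using U
    by (simp add: X_def clinear_iff vector_add_ldistrib vector_smult_assoc mult.commute)
  have Xinj: "inj X"
  proof (rule injI)
    fix x y assume "X x = X y"
    then have "U x = U y" using nw by (auto simp: X_def)
    then show "x = y" using Uinj by (simp add: inj_eq)
  qed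
  have Xb: "bij X" by (rule clinear_bij[OF X Xinj])
  have Xunit: "l (X v) (X u) = l v u" for v u
    by (simp add: X_def herm_scl[OF herm] herm_scr[OF herm] Uunit mult.assoc[symmetric] wcw mult.commute[of "cnj w"])
  have XAX: "X (A (X v)) = A v" for v
    by (simp add: X_def anti_scale[OF anti] clinear_scale[OF U] vector_smult_assoc UAU wcw)
  define L where "L = map (\<lambda>z. w * z) L1"
  have annX: "peval (lprod L) X v = 0" for v
  proof -
    have "lprod L = (\<Prod>z\<leftarrow>L1. [:-(w*z), 1:])" by (simp add: L_def o_def)
    then show ?thesis using peval_lprod_scale[OF U, of w L1 v] ann1
      by (simp add: X_def[abs_def])
  qed
  have goodL: "\<forall>z\<in>set L. z \<notin> \<real>\<^sub>\<le>\<^sub>0" using wg by (auto simp: L_def)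
  obtain G where G: "clinear_map G" and GG: "\<And>v. G (G v) = X v" and Gl: "\<And>v u. l (G v) (G u) = l v u"
    and GAG: "\<And>v. G (A (G v)) = A v"
    using core[OF herm anti Ainj X Xb Xunit XAX annX goodL] by blast
  define a where "a = cnj (csqrt w)"
  have ca: "cnj a = csqrt w" by (simp add: a_def)
  have caca: "cnj a * cnj a = w" using power2_csqrt[of w] by (simp add: ca power2_eq_square)
  have "norm (csqrt w) ^ 2 = 1" using nw power2_csqrt[of w] by (metis norm_power)
  then have "norm a = 1" by (simp add: a_def)
  then have aca: "a * cnj a = 1" using complex_norm_square[of a] by simp
  have a0: "a \<noteq> 0" using aca by auto
  have acw: "cnj a * cnj w = a"
  proof -
    have "cnj a * cnj w = cnj a * (a * a)" using caca by (metis complex_cnj_cnj complex_cnj_mult)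
    also have "\<dots> = (a * cnj a) * a" by (simp add: algebra_simps)
    finally show ?thesis using aca by simp
  qed
  define \<psi> where "\<psi> v = \<phi> (a *s G v)" for v
  have \<psi>: "clinear_map \<psi>" using G \<phi>
    by (simp add: \<psi>_def clinear_iff vector_add_ldistrib vector_smult_assoc mult.commute)
  have \<psi>inj: "inj \<psi>"
  proof (rule injI)
    fix x y assume "\<psi> x = \<psi> y"
    then have "a *s G x = a *s G y" using \<phi>b by (simp add: \<psi>_def bij_def inj_eq)
    then have "G (G x) = G (G y)" using a0 by simp
    then have "X x = X y" by (simp add: GG)
    then show "x = y" using Xinj by (simp add: inj_eq)
  qed
  have \<psi>b: "bij \<psi>" by (rule clinear_bij[OF \<psi> \<psi>inj])
  have \<psi>l: "l' (\<psi> v) (\<psi> u) = l v u" for v u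
    by (simp add: \<psi>_def \<phi>l herm_scl[OF herm] herm_scr[OF herm] Gl mult.assoc[symmetric] aca mult.commute[of "cnj a"])
  have CX: "C y = cnj w *s X (A y)" for y
    by (simp add: X_def UA[symmetric] vector_smult_assoc mult.commute[of "cnj w"] wcw)
  have \<psi>A: "\<psi> (A v) = A' (\<psi> v)" for v
  proof -
    have "A' (\<psi> v) = \<phi> (C (a *s G v))" by (simp add: \<psi>_def C_def \<phi>\<phi>i)
    also have "C (a *s G v) = cnj a *s C (G v)" by (rule anti_scale[OF Canti])
    also have "C (G v) = cnj w *s G (A v)" by (simp add: CX GG[symmetric] GAG)
    finally show ?thesis by (simp add: \<psi>_def vector_smult_assoc acw)
  qed
  show ?thesis unfolding pair_equiv_def using \<psi> \<psi>b \<psi>l \<psi>A by blast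
qed


end
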